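(* Let $G$ be a finite group, with $H_1,\dots,H_n$ a full set of representatives of conjugacy classes of subgroups. Then $$\mathrm{lcm}_{1\le i\le n}\ \mathcal{K}_{G/\{e\}}\big(G/H_i\big)\quad\text{divides}\quad \mathrm{lcm}_{(H_i,V)}\ \mathcal{K}_{(G/\{e\},\mathbf 1)}\big((G/H_i,V)\big),$$ where the left side is computed in the Burnside ring $\Omega(G)$ and the right side in the global representation ring $R(G,e)$, the lcm on the right running over all $i$ and all irreducible representations $V$ of $H_i$ (up to $N_G(H_i)$-conjugation). That is, the Knutson Index of the Burnside ring with respect to the generating set of rows of the table of marks divides the Knutson Index of the global representation ring with respect to the generating set of rows of the global table.
   Context: For a commutative ring $R$ with ring homomorphism $\alpha:R\to\mathbb{Z}$ and regular element $r$ (i.e. $\alpha(r)\ne0$ and $xr=\alpha(x)r$ for all $x$), the Knutson Index $\mathcal{K}_r(x)$ is the non-negative integer $m$ with $Rx\cap\mathbb{Z}r=m\mathbb{Z}r$. $\Omega(G)$ is the Burnside ring (Grothendieck ring of finite $G$-sets under disjoint union and Cartesian product), $\alpha(X)=|X|$, regular element $G/\{e\}$. $R(G,e)$ is the global representation ring: the Grothendieck ring of $G$-equivariant complex vector bundles on finite $G$-sets, with addition by disjoint union and product given by Cartesian product of bases with tensor product of fibres; it has $\mathbb{Z}$-basis the classes $(G/H_i,V)$ (the bundle on $G/H_i$ whose fibre at the identity coset is the irreducible $H_i$-representation $V$, taken up to $N_G(H_i)$-conjugation). Elements are detected by marks $(G/H,V)(K,k)=\sum_{gH\in(G/H)^K}\chi_V(g^{-1}kg)$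 for $K\le G$, $k\in K$, which are ring homomorphisms to $\mathbb{C}$. The dimension homomorphism on $R(G,e)$ is $x\mapsto x(\{e\},e)$, so $\alpha((G/H,V))=|G/H|\dim V$, and the regular element is $(G/\{e\},\mathbf 1)$, where $\mathbf 1$ is the (regular = trivial) representation of the trivial group. *)

theory Defs
  imports "HOL-Algebra.Coset" "Jordan_Normal_Form.Matrix"
begin

definition zspan :: "('i \<Rightarrow> 'a::comm_ring_1) set \<Rightarrow> ('i \<Rightarrow> 'a) set" where
  "zspan S = {(\<lambda>i. \<Sum>s\<in>F. of_int (c s) * s i) | F c. finite F \<and> F \<subseteq> S}"

definition knutson_index ::
  "('i \<Rightarrow> 'a::comm_ring_1) set \<Rightarrow> ('i \<Rightarrow> 'a) \<Rightarrow> ('i \<Rightarrow> 'a) \<Rightarrow> nat" where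
  "knutson_index R r x =
     (THE m::nat.
        {(\<lambda>i. y i * x i) | y. y \<in> R} \<inter> {(\<lambda>i. of_int n * r i) | n::int. True}
        = {(\<lambda>i. of_int (int m * k) * r i) | k::int. True})"

definition left_cosets :: "('g, 'b) monoid_scheme \<Rightarrow> 'g set \<Rightarrow> 'g set set" where
  "left_cosets G H = {g <#\<^bsub>G\<^esub> H | g. g \<in> carrier G}"

definition fixed_cosets :: "('g, 'b) monoid_scheme \<Rightarrow> 'g set \<Rightarrow> 'g set \<Rightarrow> 'g set set" where
  "fixed_cosets G H K = {C \<in> left_cosets G H. \<forall>k\<in>K. k <#\<^bsub>G\<^esub> C = C}"

definition burnside_mark :: "('g, 'b) monoid_scheme \<Rightarrow> 'g set \<Rightarrow> ('g set \<Rightarrow> int)" where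
  "burnside_mark G H = (\<lambda>K. if subgroup K G then int (card (fixed_cosets G H K)) else 0)"

definition burnside_ring :: "('g, 'b) monoid_scheme \<Rightarrow> ('g set \<Rightarrow> int) set" where
  "burnside_ring G = zspan {burnside_mark G H | H. subgroup H G}"

definition is_rep :: "('g, 'b) monoid_scheme \<Rightarrow> 'g set \<Rightarrow> nat \<Rightarrow> ('g \<Rightarrow> complex mat) \<Rightarrow> bool" where
  "is_rep G H d \<rho> \<longleftrightarrow>
     (\<forall>h\<in>H. \<rho> h \<in> carrier_mat d d) \<and>
     (\<forall>h1\<in>H. \<forall>h2\<in>H. \<rho> (h1 \<otimes>\<^bsub>G\<^esub> h2) = \<rho> h1 * \<rho> h2) \<and>
     \<rho> \<one>\<^bsub>G\<^esub> = 1\<^sub>m d"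

definition is_irrep :: "('g, 'b) monoid_scheme \<Rightarrow> 'g set \<Rightarrow> nat \<Rightarrow> ('g \<Rightarrow> complex mat) \<Rightarrow> bool" where
  "is_irrep G H d \<rho> \<longleftrightarrow> is_rep G H d \<rho> \<and> d > 0 \<and>
     (\<forall>W. W \<subseteq> carrier_vec d \<and> 0\<^sub>v d \<in> W \<and>
          (\<forall>v\<in>W. \<forall>w\<in>W. v + w \<in> W) \<and> (\<forall>a. \<forall>v\<in>W. a \<cdot>\<^sub>v v \<in> W) \<and>
          (\<forall>h\<in>H. \<forall>v\<in>W. \<rho> h *\<^sub>v v \<in> W)
        \<longrightarrow> W = {0\<^sub>v d} \<or> W = carrier_vec d)"

definition mat_trace :: "complex mat \<Rightarrow> complex" where
  "mat_trace A = (\<Sum>i<dim_row A. A $$ (i, i))"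

text \<open>(G/H,V)(K,k) = sum over gH in (G/H)^K of chi_V(g^-1 k g); the sum is
  independent of the representative g of the coset, we pick one with SOME.\<close>
definition global_mark ::
  "('g, 'b) monoid_scheme \<Rightarrow> 'g set \<Rightarrow> ('g \<Rightarrow> complex mat) \<Rightarrow> ('g set \<times> 'g \<Rightarrow> complex)" where
  "global_mark G H \<rho> = (\<lambda>(K, k). if subgroup K G \<and> k \<in> K then
      (\<Sum>C\<in>fixed_cosets G H K.
         let g = (SOME g. g \<in> C) in mat_trace (\<rho> (inv\<^bsub>G\<^esub> g \<otimes>\<^bsub>G\<^esub> k \<otimes>\<^bsub>G\<^esub> g)))
      else 0)"

definition global_ring :: "('g, 'b) monoid_scheme \<Rightarrow> ('g set \<times> 'g \<Rightarrow> complex) set" where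
  "global_ring G = zspan {global_mark G H \<rho> | H d \<rho>. subgroup H G \<and> is_irrep G H d \<rho>}"

text \<open>Trivial (= regular) representation of the trivial group.\<close>
definition triv_rep :: "'g \<Rightarrow> complex mat" where
  "triv_rep = (\<lambda>_. 1\<^sub>m 1)"

definition conjugate_subgroups :: "('g, 'b) monoid_scheme \<Rightarrow> 'g set \<Rightarrow> 'g set \<Rightarrow> bool" where
  "conjugate_subgroups G K H \<longleftrightarrow>
     (\<exists>g\<in>carrier G. K = (\<lambda>h. g \<otimes>\<^bsub>G\<^esub> h \<otimes>\<^bsub>G\<^esub> inv\<^bsub>G\<^esub> g) ` H)"

end

theory Submission
  imports Defs
begin


lemma zspan_zero: "(\<lambda>i. 0) \<in> zspan S"
  unfolding zspan_def by (rule CollectI, rule exI[of _ "{}"], auto)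

lemma zspan_add:
  assumes "y1 \<in> zspan S" "y2 \<in> zspan S"
  shows "(\<lambda>i. y1 i + y2 i) \<in> zspan S"
proof -
  obtain F1 c1 where F1: "finite F1" "F1 \<subseteq> S" "y1 = (\<lambda>i. \<Sum>s\<in>F1. of_int (c1 s) * s i)"
    using assms(1) unfolding zspan_def by blast
  obtain F2 c2 where F2: "finite F2" "F2 \<subseteq> S" "y2 = (\<lambda>i. \<Sum>s\<in>F2. of_int (c2 s) * s i)"
    using assms(2) unfolding zspan_def by blast
  define c where "c s = (if s \<in> F1 then c1 s else 0) + (if s \<in> F2 then c2 s else 0)" for s
  have "(\<lambda>i. y1 i + y2 i) = (\<lambda>i. \<Sum>s\<in>F1 \<union> F2. of_int (c s) * s i)"
  proof
    fix i
    have a: "(\<Sum>s\<in>F1 \<union> F2. of_int (if s \<in> F1 then c1 s else 0) * s i) = (\<Sum>s\<in>F1. of_int (c1 s) * s i)"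
      by (rule sum.mono_neutral_cong_right) (use F1 F2 in auto)
    have b: "(\<Sum>s\<in>F1 \<union> F2. of_int (if s \<in> F2 then c2 s else 0) * s i) = (\<Sum>s\<in>F2. of_int (c2 s) * s i)"
      by (rule sum.mono_neutral_cong_right) (use F1 F2 in auto)
    show "y1 i + y2 i = (\<Sum>s\<in>F1 \<union> F2. of_int (c s) * s i)"
      unfolding c_def of_int_add distrib_right sum.distrib a b F1(3) F2(3) by simp
  qed
  then show ?thesis unfolding zspan_def using F1 F2 by blast
qed

lemma zspan_smult:
  assumes "y \<in> zspan S"
  shows "(\<lambda>i. of_int k * y i) \<in> zspan S"
proof -
  obtain F c where F: "finite F" "F \<subseteq> S" "y = (\<lambda>i. \<Sum>s\<in>F. of_int (c s) * s i)"
    using assms unfolding zspan_def by blast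
  have "(\<lambda>i. of_int k * y i) = (\<lambda>i. \<Sum>s\<in>F. of_int (k * c s) * s i)"
    unfolding F(3) sum_distrib_left by (simp add: mult.assoc)
  then show ?thesis unfolding zspan_def
    by (intro CollectI exI[of _ F] exI[of _ "\<lambda>s. k * c s"]) (use F(1,2) in auto)
qed

lemma zspan_sum:
  assumes "finite F" "\<And>s. s \<in> F \<Longrightarrow> t s \<in> zspan T"
  shows "(\<lambda>i. \<Sum>s\<in>F. of_int (c s) * t s i) \<in> zspan T"
  using assms
proof (induction F rule: finite_induct)
  case empty then show ?case using zspan_zero by simp
next
  case (insert a F)
  have "(\<lambda>i. of_int (c a) * t a i + (\<Sum>s\<in>F. of_int (c s) * t s i)) \<in> zspan T"
    by (rule zspan_add[OF zspan_smult]) (use insert in auto)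
  then show ?case using insert by simp
qed

lemma int_ideal_principal:
  assumes z: "0 \<in> I" and add: "\<And>a b. a \<in> I \<Longrightarrow> b \<in> I \<Longrightarrow> a + b \<in> I"
    and mul: "\<And>a k. a \<in> I \<Longrightarrow> k * a \<in> I"
  shows "\<exists>m::nat. I = {int m * k | k. True}"
proof (cases "I \<subseteq> {0}")
  case True
  then show ?thesis using z by (intro exI[of _ 0]) auto
next
  case False
  then obtain n where n: "n \<in> I" "n \<noteq> 0" by auto
  have "\<bar>n\<bar> \<in> I" using mul[OF n(1), of "sgn n"] by (simp add: abs_sgn mult.commute)
  then have ex: "\<exists>m::nat. m > 0 \<and> int m \<in> I" using n(2)
    by (intro exI[of _ "nat \<bar>n\<bar>"]) auto
  define m where "m = (LEAST m::nat. m > 0 \<and> int m \<in> I)"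
  have m: "m > 0" "int m \<in> I" using LeastI_ex[OF ex] unfolding m_def by auto
  have mmin: "\<And>m'. m' > 0 \<Longrightarrow> int m' \<in> I \<Longrightarrow> m \<le> m'" unfolding m_def
    by (rule Least_le) auto
  have "I = {int m * k | k. True}"
  proof (intro equalityI subsetI)
    fix x assume x: "x \<in> I"
    have "x + (- (x div int m)) * int m \<in> I" by (rule add[OF x mul[OF m(2)]])
    moreover have "x + (- (x div int m)) * int m = x mod int m"
      by (simp add: minus_div_mult_eq_mod[symmetric] algebra_simps)
    ultimately have xm: "x mod int m \<in> I" by simp
    have "x mod int m = 0"
    proof (rule ccontr)
      assume "x mod int m \<noteq> 0"
      moreover have "0 \<le> x mod int m" "x mod int m < int m" using m(1) by auto
      ultimately have "m \<le> nat (x mod int m)" using xm by (intro mmin) auto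
      then show False using \<open>x mod int m < int m\<close> \<open>0 \<le> x mod int m\<close> by linarith
    qed
    then show "x \<in> {int m * k | k. True}" by (auto elim!: dvdE simp: mod_eq_0_iff_dvd)
  next
    fix x assume "x \<in> {int m * k | k. True}"
    then show "x \<in> I" using mul[OF m(2)] by (auto simp: mult.commute)
  qed
  then show ?thesis by blast
qed

lemma knutson_spec:
  fixes r :: "'i \<Rightarrow> 'a::{idom,ring_char_0}"
  assumes r0: "r j \<noteq> 0"
  shows "{(\<lambda>i. y i * x i) | y. y \<in> zspan S} \<inter> {(\<lambda>i. of_int n * r i) | n::int. True}
        = {(\<lambda>i. of_int (int (knutson_index (zspan S) r x) * k) * r i) | k::int. True}"
proof -
  define P where "P m \<longleftrightarrow> {(\<lambda>i. y i * x i) | y. y \<in> zspan S} \<inter> {(\<lambda>i. of_int n * r i) | n::int. True}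
        = {(\<lambda>i. of_int (int m * k) * r i) | k::int. True}" for m :: nat
  define I where "I = {n::int. \<exists>y\<in>zspan S. (\<lambda>i. of_int n * r i) = (\<lambda>i. y i * x i)}"
  have "\<exists>m::nat. I = {int m * k | k. True}"
  proof (rule int_ideal_principal)
    show "0 \<in> I" unfolding I_def using zspan_zero by force
  next
    fix a b assume "a \<in> I" "b \<in> I"
    then obtain ya yb where "ya \<in> zspan S" "yb \<in> zspan S"
      "(\<lambda>i. of_int a * r i) = (\<lambda>i. ya i * x i)" "(\<lambda>i. of_int b * r i) = (\<lambda>i. yb i * x i)"
      unfolding I_def by blast
    then show "a + b \<in> I" unfolding I_def
      by (intro CollectI bexI[of _ "\<lambda>i. ya i + yb i"] zspan_add) (auto simp: fun_eq_iff distrib_right)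
  next
    fix a k assume "a \<in> I"
    then obtain ya where "ya \<in> zspan S" "(\<lambda>i. of_int a * r i) = (\<lambda>i. ya i * x i)"
      unfolding I_def by blast
    then show "k * a \<in> I" unfolding I_def
      by (intro CollectI bexI[OF _ zspan_smult[of ya S k]]) (auto simp: fun_eq_iff mult.assoc)
  qed
  then obtain m where m: "I = {int m * k | k. True}" by blast
  have Pm: "P m"
  proof -
    have "{(\<lambda>i. y i * x i) | y. y \<in> zspan S} \<inter> {(\<lambda>i. of_int n * r i) | n::int. True}
        = {(\<lambda>i. of_int n * r i) | n. n \<in> I}" unfolding I_def by auto
    also have "\<dots> = {(\<lambda>i. of_int (int m * k) * r i) | k::int. True}" unfolding m by blast
    finally show ?thesis unfolding P_def .
  qed
  have uniq: "m' = m" if "P m'" for m'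
  proof -
    have dv: "b dvd a" if Pa: "P a" and Pb: "P b" for a b
    proof -
      have "(\<lambda>i. of_int (int a * 1) * r i) \<in> {(\<lambda>i. of_int (int b * k) * r i) | k::int. True}"
        using Pa Pb unfolding P_def by blast
      then obtain k where "(\<lambda>i. of_int (int a * 1) * r i) = (\<lambda>i. of_int (int b * k) * r i)" by blast
      then have "of_int (int a) * r j = of_int (int b * k) * r j" by (metis mult_1_right)
      then have "of_int (int a) = (of_int (int b * k) :: 'a)" using r0 by simp
      then have "int a = int b * k" using of_int_eq_iff by blast
      then have "int b dvd int a" by simp
      then show ?thesis by simp
    qed
    show ?thesis using dv[OF that Pm] dv[OF Pm that] by (simp add: dvd_antisym)
  qed
  have "P (knutson_index (zspan S) r x)"
    unfolding knutson_index_def P_def[symmetric] by (rule theI[of P, OF Pm uniq])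
  then show ?thesis unfolding P_def .
qed

lemma zspan_gen: "s \<in> S \<Longrightarrow> s \<in> zspan S"
  unfolding zspan_def by (intro CollectI exI[of _ "{s}"] exI[of _ "\<lambda>_. 1"]) auto

lemma finite_left_cosets:
  assumes "finite (carrier G)" shows "finite (left_cosets G H)"
proof -
  have "left_cosets G H = (\<lambda>g. g <#\<^bsub>G\<^esub> H) ` carrier G" unfolding left_cosets_def by auto
  then show ?thesis using assms by simp
qed

lemma some_in_coset:
  assumes "group G" "subgroup H G" "C \<in> left_cosets G H"
  shows "(SOME g. g \<in> C) \<in> carrier G"
proof -
  interpret group G by fact
  obtain g where g: "g \<in> carrier G" "C = g <#\<^bsub>G\<^esub> H" using assms(3) unfolding left_cosets_def by blast
  have "g \<in> C" unfolding g(2) l_coset_def using g(1) assms(2) subgroup.one_closed by fastforce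
  then have "(SOME g. g \<in> C) \<in> C" by (rule someI)
  then show ?thesis using l_coset_carrier[OF _ g(1) assms(2)] g(2) by blast
qed

lemma trace_one: "mat_trace (1\<^sub>m d) = of_nat d"
  unfolding mat_trace_def by simp

lemma global_mark_one:
  assumes "group G" "subgroup H G" "is_rep G H d \<rho>"
  shows "global_mark G H \<rho> (K, \<one>\<^bsub>G\<^esub>) = of_int (int d * burnside_mark G H K)"
proof (cases "subgroup K G")
  case True
  interpret group G by fact
  have "\<one>\<^bsub>G\<^esub> \<in> K" using True subgroup.one_closed by blast
  have "global_mark G H \<rho> (K, \<one>\<^bsub>G\<^esub>) = (\<Sum>C\<in>fixed_cosets G H K. of_nat d)"
    unfolding global_mark_def using True \<open>\<one>\<^bsub>G\<^esub> \<in> K\<close>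
    unfolding Let_def case_prod_conv if_True
  proof (simp only: if_True simp_thms, intro sum.cong refl)
    fix C assume "C \<in> fixed_cosets G H K"
    then have "(SOME g. g \<in> C) \<in> carrier G"
      using some_in_coset[OF assms(1,2)] unfolding fixed_cosets_def by blast
    then show "mat_trace (\<rho> (inv\<^bsub>G\<^esub> (SOME g. g \<in> C) \<otimes>\<^bsub>G\<^esub> \<one>\<^bsub>G\<^esub> \<otimes>\<^bsub>G\<^esub> (SOME g. g \<in> C))) = of_nat d"
      using assms(3) unfolding is_rep_def by (simp add: trace_one)
  qed
  then show ?thesis unfolding burnside_mark_def using True by simp
next
  case False
  then show ?thesis unfolding global_mark_def burnside_mark_def by simp
qed

lemma one_coset_fixed:
  assumes "group G" shows "{\<one>\<^bsub>G\<^esub>} \<in> fixed_cosets G {\<one>\<^bsub>G\<^esub>} {\<one>\<^bsub>G\<^esub>}"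
proof -
  interpret group G by fact
  have "\<one>\<^bsub>G\<^esub> <#\<^bsub>G\<^esub> {\<one>\<^bsub>G\<^esub>} = {\<one>\<^bsub>G\<^esub>}" unfolding l_coset_def by simp
  then show ?thesis unfolding fixed_cosets_def left_cosets_def by force
qed

lemma card_fixed_one_pos:
  assumes "group G" "finite (carrier G)"
  shows "card (fixed_cosets G {\<one>\<^bsub>G\<^esub>} {\<one>\<^bsub>G\<^esub>}) \<noteq> 0"
proof -
  have "finite (fixed_cosets G {\<one>\<^bsub>G\<^esub>} {\<one>\<^bsub>G\<^esub>})"
    using finite_left_cosets[OF assms(2)] unfolding fixed_cosets_def by (rule finite_subset[rotated]) auto
  then show ?thesis using one_coset_fixed[OF assms(1)] by auto
qed

lemma triv_subgroup: "group G \<Longrightarrow> subgroup {\<one>\<^bsub>G\<^esub>} G"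
  using group.triv_subgroup by blast

lemma burnside_r_nz:
  assumes "group G" "finite (carrier G)"
  shows "burnside_mark G {\<one>\<^bsub>G\<^esub>} {\<one>\<^bsub>G\<^esub>} \<noteq> 0"
  unfolding burnside_mark_def using triv_subgroup[OF assms(1)] card_fixed_one_pos[OF assms] by simp

lemma triv_rep_rep: "group G \<Longrightarrow> is_rep G H 1 triv_rep"
  unfolding is_rep_def triv_rep_def by simp

lemma one_dim_irrep: "group G \<Longrightarrow> is_irrep G H 1 (\<lambda>_. 1\<^sub>m 1)"
  unfolding is_irrep_def
proof (intro conjI allI impI)
  show "group G \<Longrightarrow> is_rep G H 1 (\<lambda>_. 1\<^sub>m 1)" unfolding is_rep_def by simp
next
  fix W :: "complex vec set"
  assume W: "W \<subseteq> carrier_vec 1 \<and> 0\<^sub>v 1 \<in> W \<and> (\<forall>v\<in>W. \<forall>w\<in>W. v + w \<in> W) \<and>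
       (\<forall>a. \<forall>v\<in>W. a \<cdot>\<^sub>v v \<in> W) \<and> (\<forall>h\<in>H. \<forall>v\<in>W. 1\<^sub>m 1 *\<^sub>v v \<in> W)"
  show "W = {0\<^sub>v 1} \<or> W = carrier_vec 1"
  proof (cases "W \<subseteq> {0\<^sub>v 1}")
    case True then show ?thesis using W by blast
  next
    case False
    then obtain v where v: "v \<in> W" "v \<noteq> 0\<^sub>v 1" by blast
    have vc: "v \<in> carrier_vec 1" using v W by blast
    have v0: "v $ 0 \<noteq> 0"
    proof
      assume "v $ 0 = 0"
      then have "v = 0\<^sub>v 1" using vc by (intro eq_vecI) auto
      then show False using v by blast
    qed
    have "carrier_vec 1 \<subseteq> W"
    proof
      fix w :: "complex vec" assume w: "w \<in> carrier_vec 1"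
      have "w = (w $ 0 / v $ 0) \<cdot>\<^sub>v v" using w vc v0 by (intro eq_vecI) auto
      then show "w \<in> W" using W v(1) by metis
    qed
    then show ?thesis using W by blast
  qed
qed simp


lemma transfer_ring:
  assumes "group G" "y \<in> global_ring G"
  shows "\<exists>y'\<in>burnside_ring G. \<forall>K. y (K, \<one>\<^bsub>G\<^esub>) = of_int (y' K)"
proof -
  obtain F c where F: "finite F" "F \<subseteq> {global_mark G H \<rho> | H d \<rho>. subgroup H G \<and> is_irrep G H d \<rho>}"
    "y = (\<lambda>i. \<Sum>s\<in>F. of_int (c s) * s i)"
    using assms(2) unfolding global_ring_def zspan_def by blast
  have "\<forall>s\<in>F. \<exists>t. t \<in> burnside_ring G \<and> (\<forall>K. s (K, \<one>\<^bsub>G\<^esub>) = of_int (t K))"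
  proof
    fix s assume "s \<in> F"
    then obtain H d \<rho> where s: "s = global_mark G H \<rho>" "subgroup H G" "is_irrep G H d \<rho>"
      using F(2) by blast
    have "burnside_mark G H \<in> burnside_ring G"
      unfolding burnside_ring_def using s(2) by (intro zspan_gen) blast
    then have "(\<lambda>K. of_int (int d) * burnside_mark G H K) \<in> burnside_ring G"
      unfolding burnside_ring_def by (rule zspan_smult)
    moreover have "\<forall>K. s (K, \<one>\<^bsub>G\<^esub>) = of_int (of_int (int d) * burnside_mark G H K)"
      using global_mark_one[OF assms(1) s(2)] s(3) unfolding s(1) is_irrep_def by simp
    ultimately show "\<exists>t. t \<in> burnside_ring G \<and> (\<forall>K. s (K, \<one>\<^bsub>G\<^esub>) = of_int (t K))" by blast
  qed
  then obtain t where t: "\<And>s. s \<in> F \<Longrightarrow> t s \<in> burnside_ring G \<and> (\<forall>K. s (K, \<one>\<^bsub>G\<^esub>) = of_int (t s K))"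
    by metis
  have "(\<lambda>K. \<Sum>s\<in>F. of_int (c s) * t s K) \<in> burnside_ring G"
    unfolding burnside_ring_def by (rule zspan_sum) (use F(1) t in \<open>auto simp: burnside_ring_def\<close>)
  moreover have "\<forall>K. y (K, \<one>\<^bsub>G\<^esub>) = of_int (\<Sum>s\<in>F. of_int (c s) * t s K)"
    unfolding F(3) using t by simp
  ultimately show ?thesis by (intro bexI[of _ "\<lambda>K. \<Sum>s\<in>F. of_int (c s) * t s K"]) auto
qed

lemma main_dvd:
  assumes G: "group G" "finite (carrier G)" and H: "subgroup H G" and irr: "is_irrep G H d \<rho>"
  shows "knutson_index (burnside_ring G) (burnside_mark G {\<one>\<^bsub>G\<^esub>}) (burnside_mark G H)
     dvd knutson_index (global_ring G) (global_mark G {\<one>\<^bsub>G\<^esub>} triv_rep) (global_mark G H \<rho>)"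
    (is "?mO dvd ?mR")
proof -
  let ?rR = "global_mark G {\<one>\<^bsub>G\<^esub>} triv_rep"
  let ?xR = "global_mark G H \<rho>"
  let ?rO = "burnside_mark G {\<one>\<^bsub>G\<^esub>}"
  let ?xO = "burnside_mark G H"
  have rR1: "?rR (K, \<one>\<^bsub>G\<^esub>) = of_int (?rO K)" for K
    using global_mark_one[OF G(1) triv_subgroup[OF G(1)] triv_rep_rep[OF G(1)]] by simp
  have xR1: "?xR (K, \<one>\<^bsub>G\<^esub>) = of_int (int d * ?xO K)" for K
    using global_mark_one[OF G(1) H] irr unfolding is_irrep_def by simp
  have rRnz: "?rR ({\<one>\<^bsub>G\<^esub>}, \<one>\<^bsub>G\<^esub>) \<noteq> 0"
    unfolding rR1 using burnside_r_nz[OF G] by simp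
  have "(\<lambda>i. of_int (int ?mR * 1) * ?rR i) \<in>
     {(\<lambda>i. of_int (int ?mR * k) * ?rR i) | k::int. True}" by blast
  then have "(\<lambda>i. of_int (int ?mR * 1) * ?rR i) \<in> {(\<lambda>i. y i * ?xR i) | y. y \<in> global_ring G}"
    using knutson_spec[where r="?rR" and j="({\<one>\<^bsub>G\<^esub>}, \<one>\<^bsub>G\<^esub>)" and x="global_mark G H \<rho>"
       and S="{global_mark G H \<rho> | H d \<rho>. subgroup H G \<and> is_irrep G H d \<rho>}", OF rRnz]
    unfolding global_ring_def by blast
  then obtain y where y: "y \<in> global_ring G" "(\<lambda>i. of_int (int ?mR * 1) * ?rR i) = (\<lambda>i. y i * ?xR i)"
    by blast
  obtain y' where y': "y' \<in> burnside_ring G" "\<forall>K. y (K, \<one>\<^bsub>G\<^esub>) = of_int (y' K)"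
    using transfer_ring[OF G(1) y(1)] by blast
  have eqK: "int ?mR * ?rO K = (int d * y' K) * ?xO K" for K
  proof -
    have "of_int (int ?mR * 1) * ?rR (K, \<one>\<^bsub>G\<^esub>) = y (K, \<one>\<^bsub>G\<^esub>) * ?xR (K, \<one>\<^bsub>G\<^esub>)"
      using y(2) by metis
    then have "(of_int (int ?mR * ?rO K) :: complex) = of_int ((int d * y' K) * ?xO K)"
      unfolding rR1 xR1 by (simp add: y'(2) algebra_simps)
    then show ?thesis using of_int_eq_iff by blast
  qed
  have "(\<lambda>K. of_int (int d) * y' K) \<in> burnside_ring G"
    using y'(1) unfolding burnside_ring_def by (rule zspan_smult)
  have "(\<lambda>K. of_int (int ?mR) * ?rO K) \<in> {(\<lambda>i. y i * ?xO i) | y. y \<in> burnside_ring G}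
     \<inter> {(\<lambda>i. of_int n * ?rO i) | n::int. True}"
  proof (rule IntI)
    have "(\<lambda>K. of_int (int ?mR) * ?rO K) = (\<lambda>K. (of_int (int d) * y' K) * ?xO K)"
      using eqK by auto
    then show "(\<lambda>K. of_int (int ?mR) * ?rO K) \<in> {(\<lambda>i. y i * ?xO i) | y. y \<in> burnside_ring G}"
      using \<open>(\<lambda>K. of_int (int d) * y' K) \<in> burnside_ring G\<close>
      by (intro CollectI exI[of _ "\<lambda>K. of_int (int d) * y' K"]) simp
  qed blast
  then have "(\<lambda>K. of_int (int ?mR) * ?rO K) \<in> {(\<lambda>i. of_int (int ?mO * k) * ?rO i) | k::int. True}"
    using knutson_spec[where r="?rO" and j="{\<one>\<^bsub>G\<^esub>}" and x="burnside_mark G H"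
       and S="{burnside_mark G H | H. subgroup H G}", OF burnside_r_nz[OF G]]
    unfolding burnside_ring_def by blast
  then obtain k where "(\<lambda>K. int ?mR * ?rO K) = (\<lambda>K. (int ?mO * k) * ?rO K)" by auto
  then have "int ?mR * ?rO {\<one>\<^bsub>G\<^esub>} = (int ?mO * k) * ?rO {\<one>\<^bsub>G\<^esub>}" by metis
  then have "int ?mR = int ?mO * k" using burnside_r_nz[OF G] by simp
  then have "int ?mO dvd int ?mR" by simp
  then show ?thesis by simp
qed


theorem lemma4p4:
  fixes G :: "('g, 'b) monoid_scheme" and Hs :: "'g set set"
  assumes "group G" and "finite (carrier G)"
    and "\<forall>H\<in>Hs. subgroup H G"
    and "\<forall>K. subgroup K G \<longrightarrow> (\<exists>!H. H \<in> Hs \<and> conjugate_subgroups G K H)"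
  shows "Lcm {knutson_index (burnside_ring G) (burnside_mark G {\<one>\<^bsub>G\<^esub>}) (burnside_mark G H)
              | H. H \<in> Hs}
         dvd
         Lcm {knutson_index (global_ring G) (global_mark G {\<one>\<^bsub>G\<^esub>} triv_rep) (global_mark G H \<rho>)
              | H d \<rho>. H \<in> Hs \<and> is_irrep G H d \<rho>}"
proof (rule Lcm_least)
  fix a assume "a \<in> {knutson_index (burnside_ring G) (burnside_mark G {\<one>\<^bsub>G\<^esub>}) (burnside_mark G H)
              | H. H \<in> Hs}"
  then obtain H where H: "H \<in> Hs" and a: "a = knutson_index (burnside_ring G) (burnside_mark G {\<one>\<^bsub>G\<^esub>}) (burnside_mark G H)"
    by blast
  have sg: "subgroup H G" using H assms(3) by blast
  have irr: "is_irrep G H 1 (\<lambda>_. 1\<^sub>m 1)" using one_dim_irrep[OF assms(1)] .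
  have "a dvd knutson_index (global_ring G) (global_mark G {\<one>\<^bsub>G\<^esub>} triv_rep) (global_mark G H (\<lambda>_. 1\<^sub>m 1))"
    unfolding a by (rule main_dvd[OF assms(1,2) sg irr])
  also have "\<dots> dvd Lcm {knutson_index (global_ring G) (global_mark G {\<one>\<^bsub>G\<^esub>} triv_rep) (global_mark G H \<rho>)
              | H d \<rho>. H \<in> Hs \<and> is_irrep G H d \<rho>}"
    by (rule dvd_Lcm) (use H irr in blast)
  finally show "a dvd Lcm {knutson_index (global_ring G) (global_mark G {\<one>\<^bsub>G\<^esub>} triv_rep) (global_mark G H \<rho>)
              | H d \<rho>. H \<in> Hs \<and> is_irrep G H d \<rho>}" .
qed

end
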